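(* Let $S \subseteq I_3^d$ be a nonempty set, let $x^1, x^2, x^3 : S \to \{1,2,3\}$ be functions such that for some $\alpha \in S$ the values $x^1(\alpha), x^2(\alpha), x^3(\alpha)$ are pairwise distinct, and for $k=1,2,3$ let $A_k$ be a $(d+1)$-dimensional polystochastic matrix of order $3$ with $\mathrm{supp}(A_k) = I_3^{d+1} \setminus \{(\beta, x^k(\beta)) : \beta \in S\}$. Then there is no vertex $B$ of $\Omega_3^{d+1}$ with $\mathrm{supp}(B) \subseteq \mathrm{supp}(A_1) \cap \mathrm{supp}(A_2) \cap \mathrm{supp}(A_3)$. Consequently, if $\mathcal{A}$ is a family of $(d+1)$-dimensional polystochastic matrices of order $3$ of this form indexed by a set $C$ of functions $S \to \{1,2,3\}$ such that any three distinct members of $C$ take pairwise distinct values at some $\alpha \in S$, then $\Omega_3^{d+1}$ has at least $|C|/2$ vertices.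
   Context: $I_3^m = \{1,2,3\}^m$; $(\beta,j)$ denotes the index in $I_3^{d+1}$ obtained by appending $j$ to $\beta \in I_3^d$. A $m$-dimensional matrix of order $3$ is an array indexed by $I_3^m$; a line is the set of entries obtained by fixing all but one coordinate; a matrix is polystochastic if its entries are nonnegative and each line sums to $1$; $\mathrm{supp}(A)=\{\alpha : a_\alpha \ne 0\}$. $\Omega_3^{m}$ is the polytope of $m$-dimensional polystochastic matrices of order $3$; vertices are its extreme points. Every polystochastic matrix is a convex combination with positive coefficients of vertices whose supports are contained in its support. *)

theory Defs
  imports "HOL-Analysis.Analysis" "HOL-Library.FuncSet"
begin

text \<open>Indices: I_3^m is represented as lists of length m with entries in {1,2,3};
  the index (beta, j) is beta @ [j].  An m-dimensional matrix of order 3 is a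
  real-valued function on index lists; members of the polytope are required to
  vanish outside I_3^m (so that they are genuinely arrays indexed by I_3^m).\<close>

definition idx :: "nat \<Rightarrow> nat list set" where
  "idx m = {xs. length xs = m \<and> set xs \<subseteq> {1,2,3}}"

definition polystochastic :: "nat \<Rightarrow> (nat list \<Rightarrow> real) \<Rightarrow> bool" where
  "polystochastic m A \<longleftrightarrow>
     (\<forall>\<alpha>\<in>idx m. 0 \<le> A \<alpha>) \<and>
     (\<forall>\<alpha>\<in>idx m. \<forall>i<m. (\<Sum>j\<in>{1,2,3::nat}. A (\<alpha>[i := j])) = 1)"

definition Omega3 :: "nat \<Rightarrow> (nat list \<Rightarrow> real) set" where
  "Omega3 m = {A. polystochastic m A \<and> (\<forall>\<alpha>. \<alpha> \<notin> idx m \<longrightarrow> A \<alpha> = 0)}"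

definition supp :: "nat \<Rightarrow> (nat list \<Rightarrow> real) \<Rightarrow> nat list set" where
  "supp m A = {\<alpha> \<in> idx m. A \<alpha> \<noteq> 0}"

definition vertex :: "nat \<Rightarrow> (nat list \<Rightarrow> real) \<Rightarrow> bool" where
  "vertex m A \<longleftrightarrow> A \<in> Omega3 m \<and>
     \<not> (\<exists>B\<in>Omega3 m. \<exists>C\<in>Omega3 m. \<exists>t::real. B \<noteq> C \<and> 0 < t \<and> t < 1 \<and>
            A = (\<lambda>\<alpha>. t * B \<alpha> + (1 - t) * C \<alpha>))"

end

theory Submission
  imports Defs
begin

lemma finite_idx: "finite (idx m)"
proof -
  have "idx m = {xs. set xs \<subseteq> {1,2,3} \<and> length xs = m}" unfolding idx_def by auto
  then show ?thesis using finite_lists_length_eq[of "{1,2,3::nat}" m] by simp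
qed

lemma line_sum:
  assumes "B \<in> Omega3 (d+1)" "\<alpha> \<in> idx d"
  shows "(\<Sum>j\<in>{1,2,3::nat}. B (\<alpha> @ [j])) = 1"
proof -
  have a1: "\<alpha> @ [1] \<in> idx (d+1)" using assms(2) unfolding idx_def by auto
  have len: "length \<alpha> = d" using assms(2) unfolding idx_def by auto
  have "\<forall>\<alpha>\<in>idx (d+1). \<forall>i<d+1. (\<Sum>j\<in>{1,2,3::nat}. B (\<alpha>[i := j])) = 1"
    using assms(1) unfolding Omega3_def polystochastic_def by blast
  moreover have "d < d+1" by simp
  ultimately have "(\<Sum>j\<in>{1,2,3::nat}. B ((\<alpha> @ [1])[d := j])) = 1"
    using a1 by blast
  moreover have "\<And>j. (\<alpha> @ [1])[d := j] = \<alpha> @ [j]" using len by (simp add: list_update_append)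
  ultimately show ?thesis by simp
qed

lemma no_common:
  assumes "B \<in> Omega3 (d+1)" "\<alpha> \<in> idx d"
    and "\<And>j. j \<in> {1,2,3} \<Longrightarrow> \<alpha> @ [j] \<notin> supp (d+1) B"
  shows False
proof -
  have "\<And>j. j \<in> {1,2,3::nat} \<Longrightarrow> B (\<alpha> @ [j]) = 0"
  proof -
    fix j :: nat assume j: "j \<in> {1,2,3}"
    have "\<alpha> @ [j] \<in> idx (d+1)" using assms(2) j unfolding idx_def by auto
    then show "B (\<alpha> @ [j]) = 0" using assms(3)[OF j] unfolding supp_def by auto
  qed
  then have "(\<Sum>j\<in>{1,2,3::nat}. B (\<alpha> @ [j])) = 0" by simp
  then show False using line_sum[OF assms(1,2)] by simp
qed

lemma part1:
  assumes S: "S \<subseteq> idx d" and a: "\<alpha> \<in> S"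
    and x1: "x1 \<alpha> \<in> {1,2,3::nat}" and x2: "x2 \<alpha> \<in> {1,2,3}" and x3: "x3 \<alpha> \<in> {1,2,3}"
    and dist: "x1 \<alpha> \<noteq> x2 \<alpha>" "x1 \<alpha> \<noteq> x3 \<alpha>" "x2 \<alpha> \<noteq> x3 \<alpha>"
    and s1: "supp (d+1) A1 = idx (d+1) - {\<beta> @ [x1 \<beta>] | \<beta>. \<beta> \<in> S}"
    and s2: "supp (d+1) A2 = idx (d+1) - {\<beta> @ [x2 \<beta>] | \<beta>. \<beta> \<in> S}"
    and s3: "supp (d+1) A3 = idx (d+1) - {\<beta> @ [x3 \<beta>] | \<beta>. \<beta> \<in> S}"
    and B: "B \<in> Omega3 (d+1)"
    and sub: "supp (d+1) B \<subseteq> supp (d+1) A1 \<inter> supp (d+1) A2 \<inter> supp (d+1) A3"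
  shows False
proof (rule no_common[OF B])
  show "\<alpha> \<in> idx d" using S a by auto
  fix j :: nat assume j: "j \<in> {1,2,3}"
  have "j = x1 \<alpha> \<or> j = x2 \<alpha> \<or> j = x3 \<alpha>" using j x1 x2 x3 dist by auto
  then show "\<alpha> @ [j] \<notin> supp (d+1) B"
  proof (elim disjE)
    assume "j = x1 \<alpha>" then show ?thesis using sub s1 a by blast
  next
    assume "j = x2 \<alpha>" then show ?thesis using sub s2 a by blast
  next
    assume "j = x3 \<alpha>" then show ?thesis using sub s3 a by blast
  qed
qed

lemma affine_Omega:
  assumes "P \<in> Omega3 m" "Q \<in> Omega3 m"
    and nn: "\<And>\<alpha>. \<alpha> \<in> idx m \<Longrightarrow> 0 \<le> (1 - s) * P \<alpha> + s * Q \<alpha>"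
  shows "(\<lambda>\<alpha>. (1 - s) * P \<alpha> + s * Q \<alpha>) \<in> Omega3 m"
proof -
  have "\<forall>\<alpha>\<in>idx m. \<forall>i<m. (\<Sum>j\<in>{1,2,3::nat}. (1 - s) * P (\<alpha>[i := j]) + s * Q (\<alpha>[i := j])) = 1"
  proof (intro ballI allI impI)
    fix \<alpha> i assume "\<alpha> \<in> idx m" "i < m"
    then have "(\<Sum>j\<in>{1,2,3::nat}. P (\<alpha>[i := j])) = 1" "(\<Sum>j\<in>{1,2,3::nat}. Q (\<alpha>[i := j])) = 1"
      using assms(1,2) unfolding Omega3_def polystochastic_def by blast+
    then show "(\<Sum>j\<in>{1,2,3::nat}. (1 - s) * P (\<alpha>[i := j]) + s * Q (\<alpha>[i := j])) = 1"
      by (simp add: sum.distrib sum_distrib_left[symmetric])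
  qed
  moreover have "\<forall>\<alpha>. \<alpha> \<notin> idx m \<longrightarrow> (1 - s) * P \<alpha> + s * Q \<alpha> = 0"
    using assms(1,2) unfolding Omega3_def by simp
  ultimately show ?thesis using nn unfolding Omega3_def polystochastic_def by simp
qed

lemma vertex_supp_inj:
  assumes V: "vertex m V" and W: "vertex m W" and sub: "supp m V \<subseteq> supp m W"
  shows "V = W"
proof (rule ccontr)
  assume ne: "V \<noteq> W"
  have VO: "V \<in> Omega3 m" and WO: "W \<in> Omega3 m" using V W unfolding vertex_def by auto
  have Vnn: "\<And>g. g \<in> idx m \<Longrightarrow> 0 \<le> V g" and Wnn: "\<And>g. g \<in> idx m \<Longrightarrow> 0 \<le> W g"
    using VO WO unfolding Omega3_def polystochastic_def by auto
  have V0: "\<And>g. g \<notin> idx m \<Longrightarrow> V g = 0" and W0: "\<And>g. g \<notin> idx m \<Longrightarrow> W g = 0"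
    using VO WO unfolding Omega3_def by auto
  have fin: "finite (supp m W)" using finite_idx unfolding supp_def by auto
  show False
  proof (cases "supp m W = {}")
    case True
    then have "supp m V = {}" using sub by auto
    have "V = W"
    proof (rule ext)
      fix g show "V g = W g"
        using True \<open>supp m V = {}\<close> V0[of g] W0[of g] unfolding supp_def by (cases "g \<in> idx m") auto
    qed
    then show False using ne by simp
  next
    case False
    define M where "M = (\<Sum>g\<in>idx m. V g)"
    define mn where "mn = Min (W ` supp m W)"
    have Vle: "\<And>g. g \<in> idx m \<Longrightarrow> V g \<le> M" unfolding M_def
      using finite_idx Vnn by (intro member_le_sum) auto
    have mpos: "mn > 0"
    proof -
      have "mn \<in> W ` supp m W" unfolding mn_def using fin False by (intro Min_in) auto
      then obtain g where "g \<in> supp m W" "mn = W g" by auto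
      then show ?thesis using Wnn unfolding supp_def by force
    qed
    have mle: "\<And>g. g \<in> supp m W \<Longrightarrow> mn \<le> W g" unfolding mn_def using fin by auto
    have M0: "M \<ge> 0" unfolding M_def using Vnn by (intro sum_nonneg) auto
    define e where "e = min (1/2) (mn / (M + 1))"
    have epos: "e > 0" unfolding e_def using mpos M0 by simp
    have ele: "e \<le> 1/2" unfolding e_def by (rule min.cobounded1)
    have key: "\<And>g. g \<in> idx m \<Longrightarrow> e * V g \<le> W g"
    proof -
      fix g assume g: "g \<in> idx m"
      show "e * V g \<le> W g"
      proof (cases "W g = 0")
        case True
        then have "g \<notin> supp m W" unfolding supp_def by auto
        then have "V g = 0" using sub g unfolding supp_def by auto
        then show ?thesis using True by simp
      next
        case False
        then have gs: "g \<in> supp m W" using g unfolding supp_def by auto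
        have "e * V g \<le> (mn / (M + 1)) * V g"
          using Vnn[OF g] unfolding e_def by (intro mult_right_mono) auto
        also have "\<dots> = mn * (V g / (M + 1))" by simp
        also have "\<dots> \<le> mn * 1"
          using Vle[OF g] M0 mpos Vnn[OF g] by (intro mult_left_mono) (auto simp: divide_le_eq)
        also have "\<dots> \<le> W g" using mle[OF gs] by simp
        finally show ?thesis .
      qed
    qed
    define P where "P = (\<lambda>g. (1 - (-e)) * W g + (-e) * V g)"
    define Q where "Q = (\<lambda>g. (1 - e) * W g + e * V g)"
    have PO: "P \<in> Omega3 m" unfolding P_def
    proof (rule affine_Omega[OF WO VO])
      fix g assume g: "g \<in> idx m"
      have "0 \<le> e * W g" using Wnn[OF g] epos by simp
      then show "0 \<le> (1 - - e) * W g + - e * V g" using key[OF g]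
        by (simp add: algebra_simps)
    qed
    have QO: "Q \<in> Omega3 m" unfolding Q_def
    proof (rule affine_Omega[OF WO VO])
      fix g assume g: "g \<in> idx m"
      show "0 \<le> (1 - e) * W g + e * V g" using Wnn[OF g] Vnn[OF g] epos ele by simp
    qed
    have PQ: "P \<noteq> Q"
    proof
      assume "P = Q"
      then have "\<And>g. P g = Q g" by simp
      then have "\<And>g. 2 * e * (W g - V g) = 0" unfolding P_def Q_def by (simp add: algebra_simps)
      then have "\<And>g. W g = V g" using epos by simp
      then show False using ne by auto
    qed
    have "W = (\<lambda>g. (1/2) * P g + (1 - 1/2) * Q g)" unfolding P_def Q_def by (auto simp: algebra_simps)
    then show False using W PO QO PQ unfolding vertex_def
      by (metis divide_pos_pos half_gt_zero_iff less_numeral_extra(1) zero_less_numeral field_sum_of_halves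
          less_add_same_cancel1)
  qed
qed

lemma finite_vertices: "finite {B. vertex m B}"
proof -
  have "inj_on (supp m) {B. vertex m B}"
    by (rule inj_onI) (auto intro: vertex_supp_inj)
  moreover have "supp m ` {B. vertex m B} \<subseteq> Pow (idx m)" unfolding supp_def by auto
  ultimately show ?thesis using finite_idx
    by (meson finite_Pow_iff finite_imageD finite_subset)
qed

lemma exists_vertex:
  assumes "A \<in> Omega3 m"
  shows "\<exists>B. vertex m B \<and> supp m B \<subseteq> supp m A"
proof -
  let ?P = "\<lambda>B. B \<in> Omega3 m \<and> supp m B \<subseteq> supp m A"
  obtain B where PB: "?P B" and mn: "\<forall>B'. ?P B' \<longrightarrow> card (supp m B) \<le> card (supp m B')"
    using ex_has_least_nat[of ?P A "\<lambda>B. card (supp m B)"] assms by blast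
  have BO: "B \<in> Omega3 m" using PB by simp
  have Bnn: "\<And>g. g \<in> idx m \<Longrightarrow> 0 \<le> B g" using BO unfolding Omega3_def polystochastic_def by auto
  have B0: "\<And>g. g \<notin> idx m \<Longrightarrow> B g = 0" using BO unfolding Omega3_def by auto
  have finB: "finite (supp m B)" using finite_idx unfolding supp_def by auto
  have "vertex m B"
  proof (rule ccontr)
    assume "\<not> vertex m B"
    then obtain P Q t where PO: "P \<in> Omega3 m" and QO: "Q \<in> Omega3 m" and PQ: "P \<noteq> Q"
      and t: "0 < t" "t < 1" and Beq: "B = (\<lambda>\<alpha>. t * P \<alpha> + (1 - t) * Q \<alpha>)"
      using BO unfolding vertex_def by blast
    have gen: "\<exists>P'. P' \<in> Omega3 m \<and> (\<forall>g\<in>idx m. B g = 0 \<longrightarrow> P' g = 0) \<and> (\<exists>g\<in>idx m. P' g < B g)"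
    proof -
      from PQ obtain g where g: "P g \<noteq> Q g" by auto
      have gi: "g \<in> idx m"
      proof (rule ccontr)
        assume "g \<notin> idx m"
        then have "P g = 0" "Q g = 0" using PO QO unfolding Omega3_def by auto
        then show False using g by simp
      qed
      have Pnn: "\<And>h. h \<in> idx m \<Longrightarrow> 0 \<le> P h" and Qnn: "\<And>h. h \<in> idx m \<Longrightarrow> 0 \<le> Q h"
        using PO QO unfolding Omega3_def polystochastic_def by auto
      have zP: "\<forall>h\<in>idx m. B h = 0 \<longrightarrow> P h = 0" and zQ: "\<forall>h\<in>idx m. B h = 0 \<longrightarrow> Q h = 0"
      proof (safe)
        fix h assume h: "h \<in> idx m" "B h = 0"
        then have e: "t * P h + (1 - t) * Q h = 0" using Beq by metis
        have "0 \<le> t * P h" "0 \<le> (1 - t) * Q h" using Pnn[OF h(1)] Qnn[OF h(1)] t by auto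
        then have "t * P h = 0" "(1 - t) * Q h = 0" using e by linarith+
        then show "P h = 0" "Q h = 0" using t by auto
      qed
      show ?thesis
      proof (cases "P g < Q g")
        case True
        have "P g < B g" using True t Beq
        proof -
          have "B g - P g = (1 - t) * (Q g - P g)" using Beq by (simp add: algebra_simps)
          moreover have "(1 - t) * (Q g - P g) > 0" using True t by simp
          ultimately show ?thesis by simp
        qed
        then show ?thesis using PO zP gi by blast
      next
        case False
        then have "Q g < P g" using g by simp
        have "B g - Q g = t * (P g - Q g)" using Beq by (simp add: algebra_simps)
        moreover have "t * (P g - Q g) > 0" using \<open>Q g < P g\<close> t by simp
        ultimately have "Q g < B g" by simp
        then show ?thesis using QO zQ gi by blast
      qed
    qed
    then obtain R where RO: "R \<in> Omega3 m" and Rz: "\<forall>g\<in>idx m. B g = 0 \<longrightarrow> R g = 0"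
      and ex: "\<exists>g\<in>idx m. R g < B g" by blast
    define E where "E = {g \<in> idx m. R g < B g}"
    have Efin: "finite E" unfolding E_def using finite_idx by auto
    have Ene: "E \<noteq> {}" unfolding E_def using ex by auto
    have Esupp: "E \<subseteq> supp m B"
    proof
      fix g assume "g \<in> E"
      then have "g \<in> idx m" "R g < B g" unfolding E_def by auto
      then show "g \<in> supp m B" using Rz unfolding supp_def by force
    qed
    define f where "f = (\<lambda>g. B g / (B g - R g))"
    define s where "s = Min (f ` E)"
    obtain g0 where g0E: "g0 \<in> E" and sg0: "s = f g0"
    proof -
      have "s \<in> f ` E" unfolding s_def using Efin Ene by (intro Min_in) auto
      then show ?thesis using that by auto
    qed
    have sle: "\<And>g. g \<in> E \<Longrightarrow> s \<le> f g" unfolding s_def using Efin by auto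
    have spos: "s \<ge> 0"
    proof -
      have "g0 \<in> idx m" "R g0 < B g0" using g0E unfolding E_def by auto
      then show ?thesis using sg0 Bnn unfolding f_def by simp
    qed
    define B' where "B' = (\<lambda>g. (1 - s) * B g + s * R g)"
    have B'O: "B' \<in> Omega3 m" unfolding B'_def
    proof (rule affine_Omega[OF BO RO])
      fix g assume g: "g \<in> idx m"
      show "0 \<le> (1 - s) * B g + s * R g"
      proof (cases "R g < B g")
        case True
        then have gE: "g \<in> E" unfolding E_def using g by auto
        have "s \<le> B g / (B g - R g)" using sle[OF gE] unfolding f_def .
        then have "s * (B g - R g) \<le> B g" using True by (simp add: le_divide_eq)
        then show ?thesis by (simp add: algebra_simps)
      next
        case False
        have "(1 - s) * B g + s * R g = B g + s * (R g - B g)" by (simp add: algebra_simps)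
        moreover have "s * (R g - B g) \<ge> 0" using False spos by simp
        ultimately show ?thesis using Bnn[OF g] by simp
      qed
    qed
    have B'g0: "B' g0 = 0"
    proof -
      have "R g0 < B g0" using g0E unfolding E_def by auto
      then show ?thesis unfolding B'_def using sg0 unfolding f_def by (simp add: field_simps)
    qed
    have sub': "supp m B' \<subseteq> supp m B - {g0}"
    proof
      fix g assume g: "g \<in> supp m B'"
      then have gi: "g \<in> idx m" and nz: "B' g \<noteq> 0" unfolding supp_def by auto
      have "B g \<noteq> 0" using Rz gi nz unfolding B'_def by auto
      moreover have "g \<noteq> g0" using B'g0 nz by auto
      ultimately show "g \<in> supp m B - {g0}" using gi unfolding supp_def by auto
    qed
    have g0s: "g0 \<in> supp m B" using Esupp g0E by auto
    have "card (supp m B') < card (supp m B)"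
    proof -
      have "card (supp m B') \<le> card (supp m B - {g0})" using sub' finB by (intro card_mono) auto
      also have "\<dots> < card (supp m B)" using g0s finB by (metis card_Diff1_less)
      finally show ?thesis .
    qed
    moreover have "?P B'" using B'O sub' PB by auto
    ultimately show False using mn by fastforce
  qed
  then show ?thesis using PB by blast
qed

lemma card_le_2:
  assumes "finite F" "\<And>a b c. a \<in> F \<Longrightarrow> b \<in> F \<Longrightarrow> c \<in> F \<Longrightarrow> a \<noteq> b \<Longrightarrow> a \<noteq> c \<Longrightarrow> b \<noteq> c \<Longrightarrow> False"
  shows "card F \<le> 2"
proof (rule ccontr)
  assume "\<not> card F \<le> 2"
  then have "Suc (Suc (Suc 0)) \<le> card F" by simp
  then obtain a B where 1: "F = insert a B" "a \<notin> B" "Suc (Suc 0) \<le> card B" "finite B"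
    using card_le_Suc_iff[of "Suc (Suc 0)" F] by blast
  then obtain b B' where 2: "B = insert b B'" "b \<notin> B'" "Suc 0 \<le> card B'" "finite B'"
    using card_le_Suc_iff[of "Suc 0" B] by blast
  then obtain c B'' where 3: "B' = insert c B''" "c \<notin> B''"
    using card_le_Suc_iff[of 0 B'] by blast
  show False using assms(2)[of a b c] 1 2 3 by auto
qed

theorem mainTheorem10:
  fixes d :: nat and S :: "nat list set"
  assumes "S \<subseteq> idx d" and "S \<noteq> {}"
  shows
   "(\<forall>(x1::nat list \<Rightarrow> nat) x2 x3 A1 A2 A3.
       x1 \<in> S \<rightarrow> {1,2,3} \<and> x2 \<in> S \<rightarrow> {1,2,3} \<and> x3 \<in> S \<rightarrow> {1,2,3} \<and>
       (\<exists>\<alpha>\<in>S. x1 \<alpha> \<noteq> x2 \<alpha> \<and> x1 \<alpha> \<noteq> x3 \<alpha> \<and> x2 \<alpha> \<noteq> x3 \<alpha>) \<and>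
       A1 \<in> Omega3 (d+1) \<and> supp (d+1) A1 = idx (d+1) - {\<beta> @ [x1 \<beta>] | \<beta>. \<beta> \<in> S} \<and>
       A2 \<in> Omega3 (d+1) \<and> supp (d+1) A2 = idx (d+1) - {\<beta> @ [x2 \<beta>] | \<beta>. \<beta> \<in> S} \<and>
       A3 \<in> Omega3 (d+1) \<and> supp (d+1) A3 = idx (d+1) - {\<beta> @ [x3 \<beta>] | \<beta>. \<beta> \<in> S}
       \<longrightarrow> \<not> (\<exists>B. vertex (d+1) B \<and>
                 supp (d+1) B \<subseteq> supp (d+1) A1 \<inter> supp (d+1) A2 \<inter> supp (d+1) A3))
    \<and>
    (\<forall>(C::(nat list \<Rightarrow> nat) set) (A::(nat list \<Rightarrow> nat) \<Rightarrow> nat list \<Rightarrow> real).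
       C \<subseteq> (S \<rightarrow>\<^sub>E {1,2,3}) \<and>
       (\<forall>c1\<in>C. \<forall>c2\<in>C. \<forall>c3\<in>C. c1 \<noteq> c2 \<and> c1 \<noteq> c3 \<and> c2 \<noteq> c3 \<longrightarrow>
           (\<exists>\<alpha>\<in>S. c1 \<alpha> \<noteq> c2 \<alpha> \<and> c1 \<alpha> \<noteq> c3 \<alpha> \<and> c2 \<alpha> \<noteq> c3 \<alpha>)) \<and>
       (\<forall>c\<in>C. A c \<in> Omega3 (d+1) \<and>
                supp (d+1) (A c) = idx (d+1) - {\<beta> @ [c \<beta>] | \<beta>. \<beta> \<in> S})
       \<longrightarrow> real (card C) / 2 \<le> real (card {B. vertex (d+1) B}))"
proof (intro conjI allI impI)
  fix x1 x2 x3 :: "nat list \<Rightarrow> nat" and A1 A2 A3 :: "nat list \<Rightarrow> real"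
  assume h: "x1 \<in> S \<rightarrow> {1,2,3} \<and> x2 \<in> S \<rightarrow> {1,2,3} \<and> x3 \<in> S \<rightarrow> {1,2,3} \<and>
       (\<exists>\<alpha>\<in>S. x1 \<alpha> \<noteq> x2 \<alpha> \<and> x1 \<alpha> \<noteq> x3 \<alpha> \<and> x2 \<alpha> \<noteq> x3 \<alpha>) \<and>
       A1 \<in> Omega3 (d+1) \<and> supp (d+1) A1 = idx (d+1) - {\<beta> @ [x1 \<beta>] | \<beta>. \<beta> \<in> S} \<and>
       A2 \<in> Omega3 (d+1) \<and> supp (d+1) A2 = idx (d+1) - {\<beta> @ [x2 \<beta>] | \<beta>. \<beta> \<in> S} \<and>
       A3 \<in> Omega3 (d+1) \<and> supp (d+1) A3 = idx (d+1) - {\<beta> @ [x3 \<beta>] | \<beta>. \<beta> \<in> S}"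
  show "\<not> (\<exists>B. vertex (d+1) B \<and>
                 supp (d+1) B \<subseteq> supp (d+1) A1 \<inter> supp (d+1) A2 \<inter> supp (d+1) A3)"
  proof
    assume "\<exists>B. vertex (d+1) B \<and> supp (d+1) B \<subseteq> supp (d+1) A1 \<inter> supp (d+1) A2 \<inter> supp (d+1) A3"
    then obtain B where B: "vertex (d+1) B" "supp (d+1) B \<subseteq> supp (d+1) A1 \<inter> supp (d+1) A2 \<inter> supp (d+1) A3"
      by blast
    from h obtain \<alpha> where a: "\<alpha> \<in> S" "x1 \<alpha> \<noteq> x2 \<alpha>" "x1 \<alpha> \<noteq> x3 \<alpha>" "x2 \<alpha> \<noteq> x3 \<alpha>" by blast
    show False
      apply (rule part1[of S d \<alpha> x1 x2 x3 A1 A2 A3 B])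
      using assms h a B unfolding vertex_def by (auto simp: Pi_def)
  qed
next
  fix C :: "(nat list \<Rightarrow> nat) set" and A :: "(nat list \<Rightarrow> nat) \<Rightarrow> nat list \<Rightarrow> real"
  assume h: "C \<subseteq> (S \<rightarrow>\<^sub>E {1,2,3}) \<and>
       (\<forall>c1\<in>C. \<forall>c2\<in>C. \<forall>c3\<in>C. c1 \<noteq> c2 \<and> c1 \<noteq> c3 \<and> c2 \<noteq> c3 \<longrightarrow>
           (\<exists>\<alpha>\<in>S. c1 \<alpha> \<noteq> c2 \<alpha> \<and> c1 \<alpha> \<noteq> c3 \<alpha> \<and> c2 \<alpha> \<noteq> c3 \<alpha>)) \<and>
       (\<forall>c\<in>C. A c \<in> Omega3 (d+1) \<and>
                supp (d+1) (A c) = idx (d+1) - {\<beta> @ [c \<beta>] | \<beta>. \<beta> \<in> S})"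
  have finS: "finite S" using assms(1) finite_idx finite_subset by blast
  have finC: "finite C" using h finS by (meson finite_PiE finite_insert finite.emptyI finite_subset)
  define f where "f = (\<lambda>c. SOME B. vertex (d+1) B \<and> supp (d+1) B \<subseteq> supp (d+1) (A c))"
  have fc: "\<And>c. c \<in> C \<Longrightarrow> vertex (d+1) (f c) \<and> supp (d+1) (f c) \<subseteq> supp (d+1) (A c)"
    unfolding f_def using h exists_vertex by (metis (no_types, lifting) someI_ex)
  have fib: "\<And>b. card {c \<in> C. f c = b} \<le> 2"
  proof -
    fix b
    show "card {c \<in> C. f c = b} \<le> 2"
    proof (rule card_le_2)
      show "finite {c \<in> C. f c = b}" using finC by auto
      fix c1 c2 c3 assume c: "c1 \<in> {c \<in> C. f c = b}" "c2 \<in> {c \<in> C. f c = b}" "c3 \<in> {c \<in> C. f c = b}"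
        "c1 \<noteq> c2" "c1 \<noteq> c3" "c2 \<noteq> c3"
      have inC: "c1 \<in> C" "c2 \<in> C" "c3 \<in> C" and fb: "f c1 = b" "f c2 = b" "f c3 = b" using c by auto
      obtain \<alpha> where a: "\<alpha> \<in> S" "c1 \<alpha> \<noteq> c2 \<alpha>" "c1 \<alpha> \<noteq> c3 \<alpha>" "c2 \<alpha> \<noteq> c3 \<alpha>"
        using h inC c(4-6) by blast
      have vals: "c1 \<alpha> \<in> {1,2,3}" "c2 \<alpha> \<in> {1,2,3}" "c3 \<alpha> \<in> {1,2,3}"
        using inC h a(1) by (auto simp: PiE_def Pi_def)
      show False
        apply (rule part1[of S d \<alpha> c1 c2 c3 "A c1" "A c2" "A c3" b])
        using assms a vals h inC fc[of c1] fc[of c2] fc[of c3] fb unfolding vertex_def by auto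
    qed
  qed
  have "card C = card (\<Union>b\<in>f ` C. {c \<in> C. f c = b})"
    by (rule arg_cong[where f=card]) auto
  also have "\<dots> \<le> (\<Sum>b\<in>f ` C. card {c \<in> C. f c = b})" using finC by (intro card_UN_le) auto
  also have "\<dots> \<le> (\<Sum>b\<in>f ` C. 2)" using fib by (intro sum_mono) auto
  also have "\<dots> = 2 * card (f ` C)" by simp
  also have "\<dots> \<le> 2 * card {B. vertex (d+1) B}"
    using fc finite_vertices by (intro mult_left_mono card_mono) auto
  finally have "card C \<le> 2 * card {B. vertex (d+1) B}" .
  then show "real (card C) / 2 \<le> real (card {B. vertex (d+1) B})" by linarith
qed

end
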